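(* Let $X$ be a finite set, $f:2^X\to\mathbb{R}_{\ge 0}$ a normalized monotone submodular function, $n\ge1$ an integer with $n\le|X|$, and $S^*\in\arg\max_{S\subseteq X,\,|S|\le n} f(S)$. Let $x_1,\dots,x_n\in X$ be distinct, set $S_0=\emptyset$, $S_i=\{x_1,\dots,x_i\}$, $S=S_n$, and let $\alpha_1,\dots,\alpha_n$ be positive reals such that for every $i\in\{1,\dots,n\}$, \[ \alpha_i\, f(x_i\mid S_{i-1}) \ \ge\ \max_{x\in X\setminus S_{i-1}} f(x\mid S_{i-1}). \] Then \[ f(S)\ \ge\ \left(1-e^{-\frac{1}{n}\sum_{i=1}^n \frac{1}{\alpha_i}}\right) f(S^* ). \]
   Context: For $A\subseteq X$ and $x\in X$, $f(x\mid A):=f(A\cup\{x\})-f(A)$, and $f(x):=f(\{x\})$. Submodular: $f(x\mid A)\ge f(x\mid B)$ for all $A\subseteq B\subseteq X$, $x\in X\setminus B$; monotone: $f(A)\le f(B)$ for $A\subseteq B$; normalized: $f(\emptyset)=0$. *)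

theory Defs
  imports "HOL-Analysis.Analysis"
begin

definition marg :: "('a set \<Rightarrow> real) \<Rightarrow> 'a \<Rightarrow> 'a set \<Rightarrow> real" where
  "marg f x A = f (A \<union> {x}) - f A"

definition submodular_on :: "'a set \<Rightarrow> ('a set \<Rightarrow> real) \<Rightarrow> bool" where
  "submodular_on X f \<longleftrightarrow>
     (\<forall>A B x. A \<subseteq> B \<longrightarrow> B \<subseteq> X \<longrightarrow> x \<in> X - B \<longrightarrow> marg f x A \<ge> marg f x B)"

definition monotone_on_sets :: "'a set \<Rightarrow> ('a set \<Rightarrow> real) \<Rightarrow> bool" where
  "monotone_on_sets X f \<longleftrightarrow> (\<forall>A B. A \<subseteq> B \<longrightarrow> B \<subseteq> X \<longrightarrow> f A \<le> f B)"

definition normalized :: "('a set \<Rightarrow> real) \<Rightarrow> bool" where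
  "normalized f \<longleftrightarrow> f {} = 0"

end

theory Submission
  imports Defs
begin

lemma sum_bound:
  assumes submod: "submodular_on X f" and A: "A \<subseteq> X"
    and T: "finite T" "T \<subseteq> X"
  shows "f (A \<union> T) \<le> f A + (\<Sum>y\<in>T. marg f y A)"
  using T
proof (induction T rule: finite_induct)
  case empty
  then show ?case by simp
next
  case (insert y T)
  then have IH: "f (A \<union> T) \<le> f A + (\<Sum>y\<in>T. marg f y A)" by simp
  have s: "(\<Sum>y\<in>insert y T. marg f y A) = marg f y A + (\<Sum>y\<in>T. marg f y A)"
    using insert by simp
  show ?case
  proof (cases "y \<in> A")
    case True
    then have "A \<union> insert y T = A \<union> T" by auto
    moreover have "marg f y A = 0" using True unfolding marg_def
      by (simp add: insert_absorb)
    ultimately show ?thesis using IH s by simp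
  next
    case False
    have "marg f y (A \<union> T) \<le> marg f y A"
      using submod False insert unfolding submodular_on_def
      by (metis A Diff_iff Un_iff Un_subset_iff insert_subset sup_ge1)
    moreover have "f (A \<union> insert y T) = f (A \<union> T) + marg f y (A \<union> T)"
      unfolding marg_def by (simp add: Un_insert_right)
    ultimately show ?thesis using IH s by linarith
  qed
qed

theorem theorem1:
  fixes X :: "'a set" and f :: "'a set \<Rightarrow> real" and n :: nat
    and Sstar :: "'a set" and x :: "nat \<Rightarrow> 'a" and \<alpha> :: "nat \<Rightarrow> real"
  assumes finX: "finite X"
    and nonneg: "\<forall>A. A \<subseteq> X \<longrightarrow> f A \<ge> 0"
    and norm: "normalized f"
    and mono: "monotone_on_sets X f"
    and submod: "submodular_on X f"
    and n_pos: "n \<ge> 1" and n_le: "n \<le> card X"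
    and Sstar_feas: "Sstar \<subseteq> X" "card Sstar \<le> n"
    and Sstar_opt: "\<forall>T. T \<subseteq> X \<longrightarrow> card T \<le> n \<longrightarrow> f T \<le> f Sstar"
    and x_in: "\<forall>i\<in>{1..n}. x i \<in> X"
    and x_dist: "inj_on x {1..n}"
    and \<alpha>_pos: "\<forall>i\<in>{1..n}. \<alpha> i > 0"
    and greedy: "\<forall>i\<in>{1..n}.
        \<alpha> i * marg f (x i) (x ` {1..i-1})
          \<ge> Max ((\<lambda>y. marg f y (x ` {1..i-1})) ` (X - x ` {1..i-1}))"
  shows "f (x ` {1..n}) \<ge> (1 - exp (- (1 / real n) * (\<Sum>i=1..n. 1 / \<alpha> i))) * f Sstar"
proof -
  define S where "S i = x ` {1..i}" for i
  define OPT where "OPT = f Sstar"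
  have SX: "S i \<subseteq> X" if "i \<le> n" for i using x_in that unfolding S_def by auto
  have cardS: "card (S i) = i" if "i \<le> n" for i
  proof -
    have "inj_on x {1..i}" using x_dist that by (auto intro: inj_on_subset)
    then show ?thesis unfolding S_def by (simp add: card_image)
  qed
  have fS: "f (S i) \<le> OPT" if "i \<le> n" for i
    using Sstar_opt SX[OF that] cardS[OF that] that unfolding OPT_def by simp
  have S0: "S 0 = {}" unfolding S_def by simp
  have Ssuc: "S (Suc k) = S k \<union> {x (Suc k)}" for k
    unfolding S_def by (auto simp: atLeastAtMostSuc_conv)
  have margnn: "marg f y A \<ge> 0" if "A \<subseteq> X" "y \<in> X" for y A
    using mono that unfolding monotone_on_sets_def marg_def by (metis Un_insert_right insert_subset subset_insertI sup_bot.right_neutral diff_ge_0_iff_ge)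
  have step: "OPT - f (S k) \<le> real n * \<alpha> (Suc k) * (f (S (Suc k)) - f (S k))"
    if k: "Suc k \<le> n" for k
  proof -
    define A where "A = S k"
    define M where "M = Max ((\<lambda>y. marg f y A) ` (X - A))"
    have AX: "A \<subseteq> X" using SX k A_def by simp
    have xnA: "x (Suc k) \<notin> A"
    proof
      assume "x (Suc k) \<in> A"
      then obtain j where j: "j \<in> {1..k}" "x j = x (Suc k)" unfolding A_def S_def by auto
      then have "j = Suc k" using x_dist k by (auto dest: inj_onD)
      then show False using j by simp
    qed
    have xX: "x (Suc k) \<in> X" using x_in k by simp
    have finD: "finite (X - A)" using finX by simp
    have Mge: "marg f y A \<le> M" if "y \<in> X - A" for y
      unfolding M_def using finD that by (intro Max_ge) auto
    have M0: "M \<ge> 0" using Mge[of "x (Suc k)"] xnA xX margnn[OF AX xX] by simp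
    have gr: "\<alpha> (Suc k) * marg f (x (Suc k)) A \<ge> M"
      using greedy k unfolding M_def A_def S_def by force
    have "OPT \<le> f (A \<union> Sstar)"
      unfolding OPT_def using mono AX Sstar_feas unfolding monotone_on_sets_def by auto
    also have "\<dots> \<le> f A + (\<Sum>y\<in>Sstar. marg f y A)"
      by (rule sum_bound[OF submod AX]) (use Sstar_feas finX in \<open>auto intro: finite_subset\<close>)
    also have "(\<Sum>y\<in>Sstar. marg f y A) \<le> (\<Sum>y\<in>Sstar. M)"
    proof (rule sum_mono)
      fix y assume y: "y \<in> Sstar"
      show "marg f y A \<le> M"
      proof (cases "y \<in> A")
        case True
        then have "marg f y A = 0" unfolding marg_def by (simp add: insert_absorb)
        then show ?thesis using M0 by simp
      next
        case False
        then show ?thesis using Mge y Sstar_feas by auto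
      qed
    qed
    also have "(\<Sum>y\<in>Sstar. M) = real (card Sstar) * M" by simp
    also have "\<dots> \<le> real n * M" using Sstar_feas M0 by (simp add: mult_right_mono)
    also have "\<dots> \<le> real n * (\<alpha> (Suc k) * marg f (x (Suc k)) A)"
      using gr by (simp add: mult_left_mono)
    finally have "OPT \<le> f A + real n * (\<alpha> (Suc k) * marg f (x (Suc k)) A)" by simp
    moreover have "marg f (x (Suc k)) A = f (S (Suc k)) - f (S k)"
      unfolding marg_def A_def Ssuc by simp
    ultimately show ?thesis unfolding A_def by (simp add: algebra_simps)
  qed
  have main: "OPT - f (S k) \<le> exp (- (1 / real n) * (\<Sum>i=1..k. 1 / \<alpha> i)) * OPT"
    if "k \<le> n" for k
    using that
  proof (induction k)
    case 0
    then show ?case using norm S0 unfolding normalized_def by simp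
  next
    case (Suc k)
    define d where "d = OPT - f (S k)"
    define d' where "d' = OPT - f (S (Suc k))"
    define a where "a = \<alpha> (Suc k)"
    define t where "t = 1 / (real n * a)"
    have apos: "a > 0" using \<alpha>_pos Suc.prems unfolding a_def by simp
    have npos: "real n > 0" using n_pos by simp
    have d0: "d \<ge> 0" using fS Suc.prems unfolding d_def by simp
    have IH: "d \<le> exp (- (1 / real n) * (\<Sum>i=1..k. 1 / \<alpha> i)) * OPT"
      using Suc unfolding d_def by simp
    have st: "d \<le> real n * a * (d - d')" using step[OF Suc.prems]
      unfolding d_def d'_def a_def by simp
    have na: "real n * a > 0" using apos npos by simp
    have "d' \<le> (1 - t) * d"
    proof -
      have "d / (real n * a) \<le> d - d'" using st na by (simp add: divide_le_eq mult.commute)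
      then show ?thesis unfolding t_def by (simp add: algebra_simps)
    qed
    also have "\<dots> \<le> exp (- t) * d"
      using d0 exp_ge_add_one_self[of "-t"] by (intro mult_right_mono) auto
    also have "\<dots> \<le> exp (- t) * (exp (- (1 / real n) * (\<Sum>i=1..k. 1 / \<alpha> i)) * OPT)"
      using IH by (intro mult_left_mono) auto
    also have "\<dots> = exp (- (1 / real n) * (\<Sum>i=1..Suc k. 1 / \<alpha> i)) * OPT"
    proof -
      have "- t + (- (1 / real n) * (\<Sum>i=1..k. 1 / \<alpha> i)) =
            - (1 / real n) * (\<Sum>i=1..Suc k. 1 / \<alpha> i)"
        unfolding t_def a_def by (simp add: algebra_simps)
      then show ?thesis by (metis exp_add mult.assoc)
    qed
    finally show ?case unfolding d'_def .
  qed
  from main[of n] show ?thesis unfolding S_def OPT_def by (simp add: algebra_simps)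
qed

end
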